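(* Let $\mathcal{K}$ be a Hilbert space, let $A$ be a closable, densely defined operator in $\mathcal{K}$, let $S$ be a closed densely defined operator in $\mathcal{K}$ and let $z\in\rho(S)$. Suppose that for some $m\in\mathbb{N}$, $$\mathcal{D}(S^m)\subseteq\mathcal{D}(\bar A),\qquad \mathcal{D}(S^{*m})\subseteq\mathcal{D}(A^* ).$$ Then $\mathrm{ad}((S-z)^{-1},\bar A)=(S-z)^{-1}\bar A-\bar A(S-z)^{-1}$ is a closable densely defined operator. If it is additionally bounded, then $$\|\mathrm{ad}((S-z)^{-m},\bar A)\|\le m\,\|(S-z)^{-1}\|^{m-1}\,\|\mathrm{ad}((S-z)^{-1},\bar A)\|.$$
   Context: $\rho(S)$ is the resolvent set of $S$. For operators $S,T$, $\mathrm{ad}(S,T):=ST-TS$ with natural domains. An operator $T$ is bounded if $\|Tf\|\le c\|f\|$ for all $f\in\mathcal{D}(T)$ and some $c\ge0$; $\|T\|=\sup\{\|Tf\|:f\in\mathcal{D}(T),\|f\|\le1\}$. *)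

theory Defs
  imports "HOL-Analysis.Analysis"
begin

text \<open>A complex Hilbert space is modelled by a Banach space type 'a (real normed,
complete) together with a complex scalar multiplication sc extending the real one
and an inner product ip (antilinear in the first argument) inducing the norm.\<close>

definition complex_hilbert :: "(complex \<Rightarrow> 'a::banach \<Rightarrow> 'a) \<Rightarrow> ('a \<Rightarrow> 'a \<Rightarrow> complex) \<Rightarrow> bool" where
  "complex_hilbert sc ip \<longleftrightarrow>
     (\<forall>r x. sc (complex_of_real r) x = r *\<^sub>R x) \<and>
     (\<forall>a b x. sc (a + b) x = sc a x + sc b x) \<and>
     (\<forall>a x y. sc a (x + y) = sc a x + sc a y) \<and>
     (\<forall>a b x. sc (a * b) x = sc a (sc b x)) \<and>
     (\<forall>x y w. ip (x + y) w = ip x w + ip y w) \<and>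
     (\<forall>a x y. ip (sc a x) y = cnj a * ip x y) \<and>
     (\<forall>x y. ip y x = cnj (ip x y)) \<and>
     (\<forall>x. ip x x = complex_of_real ((norm x)\<^sup>2))"

text \<open>Operators are identified with their graphs: a (not necessarily everywhere
defined) linear operator is a complex linear subspace of 'a \<times> 'a which is single valued.\<close>

definition is_op :: "(complex \<Rightarrow> 'a::banach \<Rightarrow> 'a) \<Rightarrow> ('a \<times> 'a) set \<Rightarrow> bool" where
  "is_op sc T \<longleftrightarrow> (0, 0) \<in> T \<and>
     (\<forall>x y u v. (x, y) \<in> T \<longrightarrow> (u, v) \<in> T \<longrightarrow> (x + u, y + v) \<in> T) \<and>
     (\<forall>a x y. (x, y) \<in> T \<longrightarrow> (sc a x, sc a y) \<in> T) \<and>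
     (\<forall>y. (0, y) \<in> T \<longrightarrow> y = 0)"

definition op_dom :: "('a \<times> 'a) set \<Rightarrow> 'a set" where
  "op_dom T = fst ` T"

definition densely_defined :: "('a::banach \<times> 'a) set \<Rightarrow> bool" where
  "densely_defined T \<longleftrightarrow> closure (op_dom T) = UNIV"

definition closed_op :: "(complex \<Rightarrow> 'a::banach \<Rightarrow> 'a) \<Rightarrow> ('a \<times> 'a) set \<Rightarrow> bool" where
  "closed_op sc T \<longleftrightarrow> is_op sc T \<and> closed T"

definition closable :: "(complex \<Rightarrow> 'a::banach \<Rightarrow> 'a) \<Rightarrow> ('a \<times> 'a) set \<Rightarrow> bool" where
  "closable sc T \<longleftrightarrow> is_op sc T \<and> (\<exists>B. closed_op sc B \<and> T \<subseteq> B)"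

definition op_closure :: "('a::banach \<times> 'a) set \<Rightarrow> ('a \<times> 'a) set" where
  "op_closure T = closure T"

definition adjoint :: "('a \<Rightarrow> 'a \<Rightarrow> complex) \<Rightarrow> ('a \<times> 'a) set \<Rightarrow> ('a \<times> 'a) set" where
  "adjoint ip T = {(y, w). \<forall>x v. (x, v) \<in> T \<longrightarrow> ip v y = ip x w}"

text \<open>Product ST (apply T first, then S) with natural domain.\<close>
definition op_mult :: "('a \<times> 'a) set \<Rightarrow> ('a \<times> 'a) set \<Rightarrow> ('a \<times> 'a) set" where
  "op_mult S T = T O S"

definition op_pow :: "('a \<times> 'a) set \<Rightarrow> nat \<Rightarrow> ('a \<times> 'a) set" where
  "op_pow T n = T ^^ n"

definition op_diff :: "('a::ab_group_add \<times> 'a) set \<Rightarrow> ('a \<times> 'a) set \<Rightarrow> ('a \<times> 'a) set" where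
  "op_diff S T = {(x, u - v) | x u v. (x, u) \<in> S \<and> (x, v) \<in> T}"

definition op_shift :: "(complex \<Rightarrow> 'a::banach \<Rightarrow> 'a) \<Rightarrow> ('a \<times> 'a) set \<Rightarrow> complex \<Rightarrow> ('a \<times> 'a) set" where
  "op_shift sc S z = {(x, y - sc z x) | x y. (x, y) \<in> S}"

definition op_inverse :: "('a \<times> 'a) set \<Rightarrow> ('a \<times> 'a) set" where
  "op_inverse T = converse T"

definition ad :: "('a::ab_group_add \<times> 'a) set \<Rightarrow> ('a \<times> 'a) set \<Rightarrow> ('a \<times> 'a) set" where
  "ad S T = op_diff (op_mult S T) (op_mult T S)"

definition bounded_op :: "('a::real_normed_vector \<times> 'a) set \<Rightarrow> bool" where
  "bounded_op T \<longleftrightarrow> (\<exists>c\<ge>0. \<forall>x y. (x, y) \<in> T \<longrightarrow> norm y \<le> c * norm x)"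

definition op_norm :: "('a::real_normed_vector \<times> 'a) set \<Rightarrow> real" where
  "op_norm T = Sup {norm y | x y. (x, y) \<in> T \<and> norm x \<le> 1}"

definition resolvent_set :: "(complex \<Rightarrow> 'a::banach \<Rightarrow> 'a) \<Rightarrow> ('a \<times> 'a) set \<Rightarrow> complex set" where
  "resolvent_set sc S = {z. is_op sc (op_inverse (op_shift sc S z)) \<and>
      op_dom (op_inverse (op_shift sc S z)) = UNIV \<and>
      bounded_op (op_inverse (op_shift sc S z))}"

end

theory Submission imports Defs begin

locale hilb =
  fixes sc :: "complex \<Rightarrow> 'a::banach \<Rightarrow> 'a" and ip :: "'a \<Rightarrow> 'a \<Rightarrow> complex"
  assumes H: "complex_hilbert sc ip"
begin

lemma sc_real: "sc (complex_of_real r) x = r *\<^sub>R x" using H unfolding complex_hilbert_def by blast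
lemma sc_addl: "sc (a + b) x = sc a x + sc b x" using H unfolding complex_hilbert_def by blast
lemma sc_addr: "sc a (x + y) = sc a x + sc a y" using H unfolding complex_hilbert_def by blast
lemma sc_mult: "sc (a * b) x = sc a (sc b x)" using H unfolding complex_hilbert_def by blast
lemma ip_addl: "ip (x + y) w = ip x w + ip y w" using H unfolding complex_hilbert_def by blast
lemma ip_scl: "ip (sc a x) y = cnj a * ip x y" using H unfolding complex_hilbert_def by blast
lemma ip_sym: "ip y x = cnj (ip x y)" using H unfolding complex_hilbert_def by blast
lemma ip_self: "ip x x = complex_of_real ((norm x)\<^sup>2)" using H unfolding complex_hilbert_def by blast

lemma sc_zero_left[simp]: "sc 0 x = 0" using sc_real[of 0 x] by simp
lemma sc_one[simp]: "sc 1 x = x" using sc_real[of 1 x] by simp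
lemma sc_zero_right[simp]: "sc a 0 = 0" using sc_addr[of a 0 0] by simp
lemma sc_minus_right: "sc a (- x) = - sc a x"
proof - have "sc a x + sc a (-x) = 0" using sc_addr[of a x "-x"] by simp thus ?thesis by (metis minus_unique) qed
lemma sc_diff_right: "sc a (x - y) = sc a x - sc a y"
  using sc_addr[of a x "-y"] sc_minus_right by simp
lemma sc_neg1: "sc (-1) x = - x" using sc_real[of "-1" x] by simp
lemma sc_minus_left: "sc (- a) x = - sc a x"
proof - have "sc a x + sc (-a) x = 0" using sc_addl[of a "-a" x] by simp thus ?thesis by (metis minus_unique) qed
lemma sc_diff_left: "sc (a - b) x = sc a x - sc b x"
  using sc_addl[of a "-b" x] sc_minus_left by simp

lemma cnj_mult_self: "cnj z * z = complex_of_real ((cmod z)\<^sup>2)"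
  using complex_norm_square[of z] by (simp add: mult.commute)

lemma ip_addr: "ip w (x + y) = ip w x + ip w y"
  by (metis ip_sym ip_addl complex_cnj_add)
lemma ip_scr: "ip x (sc a y) = a * ip x y"
  by (metis ip_sym ip_scl complex_cnj_mult complex_cnj_cnj)
lemma ip_zero_left[simp]: "ip 0 y = 0" using ip_addl[of 0 0 y] by simp
lemma ip_zero_right[simp]: "ip y 0 = 0" using ip_addr[of y 0 0] by simp
lemma ip_minus_left: "ip (- x) y = - ip x y"
proof - have "ip x y + ip (-x) y = 0" using ip_addl[of x "-x" y] by simp thus ?thesis by (metis minus_unique) qed
lemma ip_minus_right: "ip y (- x) = - ip y x"
proof - have "ip y x + ip y (-x) = 0" using ip_addr[of y x "-x"] by simp thus ?thesis by (metis minus_unique) qed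
lemma ip_diffl: "ip (x - y) w = ip x w - ip y w"
  using ip_addl[of x "-y" w] ip_minus_left by simp
lemma ip_diffr: "ip w (x - y) = ip w x - ip w y"
  using ip_addr[of w x "-y"] ip_minus_right by simp
lemma ip_self_zero: "ip x x = 0 \<Longrightarrow> x = 0" using ip_self[of x] by simp

lemma norm_sc: "norm (sc a x) = cmod a * norm x"
proof -
  have "complex_of_real ((norm (sc a x))\<^sup>2) = cnj a * a * complex_of_real ((norm x)\<^sup>2)"
    by (metis ip_self ip_scl ip_scr mult.assoc)
  also have "\<dots> = complex_of_real ((cmod a * norm x)\<^sup>2)"
    by (simp add: cnj_mult_self power_mult_distrib)
  finally have "(norm (sc a x))\<^sup>2 = (cmod a * norm x)\<^sup>2" using of_real_eq_iff by blast
  thus ?thesis by (simp add: power2_eq_iff_nonneg)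
qed

lemma re_ip_le: "Re (ip x y) \<le> norm x * norm y"
proof (cases "x = 0 \<or> y = 0")
  case True thus ?thesis by auto
next
  case False
  define x' where "x' = (1 / norm x) *\<^sub>R x"
  define y' where "y' = (1 / norm y) *\<^sub>R y"
  have nx: "norm x' = 1" "norm y' = 1" using False by (auto simp: x'_def y'_def)
  have e1: "ip (x' + y') (x' + y') - ip (x' - y') (x' - y') = 2 * (ip x' y' + ip y' x')"
    by (simp add: ip_addl ip_addr ip_diffl ip_diffr algebra_simps)
  have "ip y' x' = cnj (ip x' y')" by (rule ip_sym)
  hence "Re (ip (x' + y') (x' + y') - ip (x' - y') (x' - y')) = 4 * Re (ip x' y')"
    using e1 by simp
  hence "4 * Re (ip x' y') = (norm (x' + y'))\<^sup>2 - (norm (x' - y'))\<^sup>2"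
    by (simp add: ip_self)
  also have "\<dots> \<le> (norm (x' + y'))\<^sup>2" by simp
  also have "\<dots> \<le> 4"
  proof -
    have "norm (x' + y') \<le> 2" using norm_triangle_ineq[of x' y'] nx by simp
    from power_mono[OF this norm_ge_zero, of 2] show ?thesis by simp
  qed
  finally have "Re (ip x' y') \<le> 1" by simp
  moreover have "ip x' y' = ip x y / complex_of_real (norm x * norm y)"
    using False by (simp add: x'_def y'_def sc_real[symmetric] ip_scl ip_scr)
  ultimately show ?thesis using False
    by (simp add: Re_divide_of_real divide_le_eq)
qed

lemma cauchy_schwarz: "cmod (ip x y) \<le> norm x * norm y"
proof (cases "ip x y = 0")
  case True thus ?thesis by simp
next
  case False
  define c where "c = cnj (ip x y) / complex_of_real (cmod (ip x y))"
  have cm: "cmod c = 1" using False by (simp add: c_def norm_divide)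
  have "ip x (sc c y) = c * ip x y" by (rule ip_scr)
  also have "\<dots> = complex_of_real (cmod (ip x y))" using False
    by (simp add: c_def cnj_mult_self power2_eq_square)
  finally have "cmod (ip x y) = Re (ip x (sc c y))" by simp
  also have "\<dots> \<le> norm x * norm (sc c y)" by (rule re_ip_le)
  also have "\<dots> = norm x * norm y" by (simp add: norm_sc cm)
  finally show ?thesis .
qed

lemma tendsto_ip_left:
  assumes "(f \<longlongrightarrow> a) F" shows "((\<lambda>n. ip (f n) u) \<longlongrightarrow> ip a u) F"
proof -
  have "((\<lambda>n. f n - a) \<longlongrightarrow> 0) F" using assms by (simp add: LIM_zero)
  hence "((\<lambda>n. ip (f n) u - ip a u) \<longlongrightarrow> 0) F"
    by (rule tendsto_0_le[where K="norm u"]) (simp add: ip_diffl[symmetric] cauchy_schwarz)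
  thus ?thesis by (simp add: LIM_zero_iff)
qed

lemma tendsto_ip_right:
  assumes "(f \<longlongrightarrow> a) F" shows "((\<lambda>n. ip u (f n)) \<longlongrightarrow> ip u a) F"
proof -
  have "((\<lambda>n. cnj (ip (f n) u)) \<longlongrightarrow> cnj (ip a u)) F"
    by (intro tendsto_cnj tendsto_ip_left assms)
  thus ?thesis by (simp add: ip_sym[of u])
qed



lemma norm_diff_sc:
  "(norm (x - sc t y))\<^sup>2 = (norm x)\<^sup>2 + (cmod t)\<^sup>2 * (norm y)\<^sup>2 - 2 * Re (t * ip x y)"
proof -
  have "complex_of_real ((norm (x - sc t y))\<^sup>2) = ip (x - sc t y) (x - sc t y)" by (simp add: ip_self)
  also have "\<dots> = ip x x - t * ip x y - (cnj t * ip y x - cnj t * (t * ip y y))"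
    by (simp only: ip_diffl ip_diffr ip_scl ip_scr) (simp add: algebra_simps)
  also have "\<dots> = ip x x - (t * ip x y + cnj (t * ip x y)) + (t * cnj t) * ip y y"
    by (simp add: ip_sym[of x y] algebra_simps)
  also have "\<dots> = complex_of_real ((norm x)\<^sup>2 + (cmod t)\<^sup>2 * (norm y)\<^sup>2 - 2 * Re (t * ip x y))"
    by (simp only: ip_self complex_add_cnj complex_norm_square[symmetric]) simp
  finally show ?thesis using of_real_eq_iff by blast
qed

lemma parallelogram: fixes a b :: 'a shows "(norm (a + b))\<^sup>2 + (norm (a - b))\<^sup>2 = 2 * (norm a)\<^sup>2 + 2 * (norm b)\<^sup>2"
proof -
  have "complex_of_real ((norm (a + b))\<^sup>2 + (norm (a - b))\<^sup>2) = ip (a+b) (a+b) + ip (a-b) (a-b)"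
    by (simp add: ip_self)
  also have "\<dots> = (ip a a + ip a b + (ip b a + ip b b)) + (ip a a - ip a b - (ip b a - ip b b))"
    by (simp only: ip_diffl ip_diffr ip_addl ip_addr) (simp add: algebra_simps)
  also have "\<dots> = 2 * ip a a + 2 * ip b b" by (simp add: algebra_simps)
  also have "\<dots> = complex_of_real (2 * (norm a)\<^sup>2 + 2 * (norm b)\<^sup>2)" by (simp add: ip_self)
  finally show ?thesis using of_real_eq_iff by blast
qed


lemma riesz:
  fixes f :: "'a \<Rightarrow> complex"
  assumes add: "\<And>x y. f (x + y) = f x + f y"
    and scl: "\<And>c x. f (sc c x) = c * f x"
    and bnd: "\<And>x. cmod (f x) \<le> C * norm x"
  shows "\<exists>w. \<forall>x. f x = ip w x"
proof (cases "\<forall>x. f x = 0")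
  case True thus ?thesis by (intro exI[of _ 0]) simp
next
  case False
  then obtain x0 where fx0: "f x0 \<noteq> 0" by auto
  define N where "N = {x. f x = 0}"
  have f0: "f 0 = 0" using add[of 0 0] by simp
  have fdiff: "f (x - y) = f x - f y" for x y
    using add[of "x - y" y] by (simp add: algebra_simps)
  have fR: "f (r *\<^sub>R x) = of_real r * f x" for r x using scl[of "of_real r" x] sc_real by simp
  have N_add: "x + y \<in> N" if "x \<in> N" "y \<in> N" for x y using that by (simp add: N_def add)
  have N_sc: "sc c x \<in> N" if "x \<in> N" for x c using that by (simp add: N_def scl)
  have N_R: "r *\<^sub>R x \<in> N" if "x \<in> N" for x r using that by (simp add: N_def fR)
  have cont: "(\<lambda>n. f (X n)) \<longlonglongrightarrow> f l" if "X \<longlonglongrightarrow> l" for X l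
  proof -
    have "(\<lambda>n. X n - l) \<longlonglongrightarrow> 0" using that by (simp add: LIM_zero)
    hence "(\<lambda>n. f (X n) - f l) \<longlonglongrightarrow> 0"
      by (rule tendsto_0_le[where K=C]) (simp add: fdiff[symmetric] bnd mult.commute)
    thus ?thesis by (simp add: LIM_zero_iff)
  qed
  have closedN: "closed N"
    unfolding closed_sequential_limits
  proof (intro allI impI)
    fix X l assume a: "(\<forall>n. X n \<in> N) \<and> X \<longlonglongrightarrow> l"
    hence "(\<lambda>n. f (X n)) \<longlonglongrightarrow> f l" using cont by blast
    moreover have "(\<lambda>n. f (X n)) = (\<lambda>n. 0)" using a by (auto simp: N_def)
    ultimately have "(\<lambda>n. 0::complex) \<longlonglongrightarrow> f l" by simp
    hence "f l = 0" using LIMSEQ_unique tendsto_const by blast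
    thus "l \<in> N" by (simp add: N_def)
  qed
  have Nne: "N \<noteq> {}" using f0 N_def by auto
  define d where "d = infdist x0 N"
  have d0: "0 \<le> d" by (simp add: d_def infdist_nonneg)
  have dle: "d \<le> norm (x0 - q)" if "q \<in> N" for q
    using infdist_le[OF that, of x0] by (simp add: d_def dist_norm)
  have approx: "\<exists>p\<in>N. norm (x0 - p) < d + 1 / real (Suc n)" for n
  proof (rule ccontr)
    assume "\<not> ?thesis"
    hence h: "\<forall>p\<in>N. d + 1 / real (Suc n) \<le> dist x0 p" by (auto simp: dist_norm)
    have "d + 1 / real (Suc n) \<le> (INF a\<in>N. dist x0 a)"
      using h Nne by (intro cINF_greatest) auto
    hence "d + 1 / real (Suc n) \<le> d" by (simp add: d_def infdist_notempty[OF Nne])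
    thus False by simp
  qed
  define e where "e n = 1 / real (Suc n)" for n
  obtain P where P: "\<And>n. P n \<in> N" "\<And>n. norm (x0 - P n) < d + e n"
    using approx unfolding e_def by metis
  have e0: "e n > 0" for n by (simp add: e_def)
  have emono: "e n \<le> e M" if "M \<le> n" for n M using that by (simp add: e_def frac_le)
  have sqb: "(norm (x0 - P n))\<^sup>2 \<le> (d + e n)\<^sup>2" for n
    using P(2)[of n] by (intro power_mono) auto
  have pb: "(norm (P k - P n))\<^sup>2 \<le> 2 * (d + e n)\<^sup>2 + 2 * (d + e k)\<^sup>2 - 4 * d\<^sup>2" for n k
  proof -
    define a where "a = x0 - P n"
    define b where "b = x0 - P k"
    define mid where "mid = (1/2) *\<^sub>R (P n + P k)"
    have "mid \<in> N" unfolding mid_def by (intro N_R N_add P)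
    hence "d \<le> norm (x0 - mid)" by (rule dle)
    moreover have "a + b = 2 *\<^sub>R (x0 - mid)" by (simp add: a_def b_def mid_def algebra_simps scaleR_2)
    ultimately have "2 * d \<le> norm (a + b)" by simp
    hence "(2 * d)\<^sup>2 \<le> (norm (a + b))\<^sup>2" using d0 by (intro power_mono) auto
    moreover have "a - b = P k - P n" by (simp add: a_def b_def)
    moreover note parallelogram[of a b]
    moreover have "(norm a)\<^sup>2 \<le> (d + e n)\<^sup>2" "(norm b)\<^sup>2 \<le> (d + e k)\<^sup>2"
      using sqb by (auto simp: a_def b_def)
    ultimately show ?thesis by (simp add: power_mult_distrib)
  qed
  have lim_e: "e \<longlonglongrightarrow> 0" unfolding e_def using LIMSEQ_inverse_real_of_nat by (simp add: inverse_eq_divide)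
  have "Cauchy P"
  proof (rule CauchyI)
    fix eps :: real assume eps: "0 < eps"
    have "(\<lambda>M. 8 * d * e M + 4 * (e M)\<^sup>2) \<longlonglongrightarrow> 8 * d * 0 + 4 * 0\<^sup>2"
      by (intro tendsto_intros lim_e)
    hence "\<forall>\<^sub>F M in sequentially. 8 * d * e M + 4 * (e M)\<^sup>2 < eps\<^sup>2"
      using eps by (intro order_tendstoD(2)) auto
    then obtain M where M: "8 * d * e M + 4 * (e M)\<^sup>2 < eps\<^sup>2" by (auto simp: eventually_sequentially)
    show "\<exists>M. \<forall>m\<ge>M. \<forall>n\<ge>M. norm (P m - P n) < eps"
    proof (intro exI allI impI)
      fix m n assume mn: "M \<le> m" "M \<le> n"
      have "(norm (P m - P n))\<^sup>2 \<le> 2 * (d + e n)\<^sup>2 + 2 * (d + e m)\<^sup>2 - 4 * d\<^sup>2" by (rule pb)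
      also have "\<dots> \<le> 2 * (d + e M)\<^sup>2 + 2 * (d + e M)\<^sup>2 - 4 * d\<^sup>2"
        using emono[OF mn(1)] emono[OF mn(2)] e0[of m] e0[of n] d0
        by (intro diff_right_mono add_mono mult_left_mono power_mono) auto
      also have "\<dots> = 8 * d * e M + 4 * (e M)\<^sup>2" by (simp add: power2_eq_square algebra_simps)
      also have "\<dots> < eps\<^sup>2" by (rule M)
      finally show "norm (P m - P n) < eps" using eps by (simp add: power_less_imp_less_base)
    qed
  qed
  then obtain p where Pp: "P \<longlonglongrightarrow> p" by (auto simp: Cauchy_convergent_iff convergent_def)
  have pN: "p \<in> N" using closed_sequentially[OF closedN P(1) Pp] .
  have "norm (x0 - p) \<le> d"
  proof (rule LIMSEQ_le)
    show "(\<lambda>n. norm (x0 - P n)) \<longlonglongrightarrow> norm (x0 - p)" by (intro tendsto_intros Pp)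
    show "(\<lambda>n. d + e n) \<longlonglongrightarrow> d" using tendsto_add[OF tendsto_const lim_e, of d] by simp
    show "\<exists>N. \<forall>n\<ge>N. norm (x0 - P n) \<le> d + e n" using P(2) less_imp_le by blast
  qed
  define e0 where "e0 = x0 - p"
  have fe0: "f e0 \<noteq> 0" using fx0 pN by (simp add: e0_def fdiff N_def)
  have mn: "norm e0 \<le> norm (e0 - q)" if "q \<in> N" for q
  proof -
    have "e0 - q = x0 - (p + q)" by (simp add: e0_def algebra_simps)
    moreover have "d \<le> norm (x0 - (p + q))" using N_add[OF pN that] by (rule dle)
    ultimately show ?thesis using \<open>norm (x0 - p) \<le> d\<close> unfolding e0_def by (metis order_trans)
  qed
  have orth: "ip e0 q = 0" if "q \<in> N" for q
  proof (rule ccontr)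
    assume nz: "ip e0 q \<noteq> 0"
    define nq where "nq = (norm q)\<^sup>2"
    define s where "s = 1 / (nq + 1)"
    define K where "K = (cmod (ip e0 q))\<^sup>2"
    have nq0: "0 \<le> nq" by (simp add: nq_def)
    have s0: "0 < s" using nq0 by (simp add: s_def)
    have K0: "0 < K" using nz by (simp add: K_def)
    define t where "t = complex_of_real s * cnj (ip e0 q)"
    have ct: "(cmod t)\<^sup>2 = s\<^sup>2 * K" using s0 by (simp add: t_def K_def norm_mult power_mult_distrib)
    have rt: "Re (t * ip e0 q) = s * K"
      by (simp add: t_def K_def mult.assoc cnj_mult_self del: of_real_power)
    have "norm e0 \<le> norm (e0 - sc t q)" using mn N_sc[OF that] by blast
    hence "(norm e0)\<^sup>2 \<le> (norm (e0 - sc t q))\<^sup>2" by (intro power_mono) auto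
    also have "\<dots> = (norm e0)\<^sup>2 + s\<^sup>2 * K * nq - 2 * (s * K)"
      unfolding norm_diff_sc ct rt nq_def by simp
    finally have "2 * (s * K) \<le> (s * K) * (s * nq)" by (simp add: power2_eq_square algebra_simps)
    hence "2 \<le> s * nq" using s0 K0 by (simp add: mult_le_cancel_left_pos)
    moreover have "s * nq < 1" using nq0 by (simp add: s_def)
    ultimately show False by simp
  qed
  have ee: "ip e0 e0 \<noteq> 0" using fe0 f0 ip_self_zero by blast
  define w where "w = sc (cnj (f e0) / ip e0 e0) e0"
  show ?thesis
  proof (intro exI allI)
    fix x
    define v where "v = sc (f x) e0 - sc (f e0) x"
    have "v \<in> N" by (simp add: N_def v_def fdiff scl)
    hence "ip e0 v = 0" by (rule orth)
    hence "f x * ip e0 e0 = f e0 * ip e0 x" by (simp add: v_def ip_diffr ip_scr)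
    moreover have "cnj (ip e0 e0) = ip e0 e0" by (simp add: ip_self)
    ultimately show "f x = ip w x" using ee
      by (simp add: w_def ip_scl field_simps)
  qed
qed


lemma tendsto_sc: assumes "(f \<longlongrightarrow> l) F" shows "((\<lambda>n. sc a (f n)) \<longlongrightarrow> sc a l) F"
proof -
  have "((\<lambda>n. f n - l) \<longlongrightarrow> 0) F" using assms by (simp add: LIM_zero)
  hence "((\<lambda>n. sc a (f n) - sc a l) \<longlongrightarrow> 0) F"
    by (rule tendsto_0_le[where K="cmod a"]) (simp add: sc_diff_right[symmetric] norm_sc mult.commute)
  thus ?thesis by (simp add: LIM_zero_iff)
qed

definition lin_rel :: "('a \<times> 'a) set \<Rightarrow> bool" where
  "lin_rel T \<longleftrightarrow> (0, 0) \<in> T \<and>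
     (\<forall>x y u v. (x, y) \<in> T \<longrightarrow> (u, v) \<in> T \<longrightarrow> (x + u, y + v) \<in> T) \<and>
     (\<forall>a x y. (x, y) \<in> T \<longrightarrow> (sc a x, sc a y) \<in> T)"

lemma is_op_lin: "is_op sc T \<Longrightarrow> lin_rel T" by (simp add: is_op_def lin_rel_def)
lemma is_op_iff: "is_op sc T \<longleftrightarrow> lin_rel T \<and> (\<forall>y. (0, y) \<in> T \<longrightarrow> y = 0)"
  unfolding is_op_def lin_rel_def by (rule iffI) (elim conjE; intro conjI; assumption)+

lemma lin_zero: "lin_rel T \<Longrightarrow> (0,0) \<in> T" by (simp add: lin_rel_def)
lemma lin_add: "lin_rel T \<Longrightarrow> (x,y) \<in> T \<Longrightarrow> (u,v) \<in> T \<Longrightarrow> (x+u, y+v) \<in> T"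
  by (simp add: lin_rel_def)
lemma lin_sc: "lin_rel T \<Longrightarrow> (x,y) \<in> T \<Longrightarrow> (sc a x, sc a y) \<in> T"
  by (simp add: lin_rel_def)
lemma lin_neg: "lin_rel T \<Longrightarrow> (x,y) \<in> T \<Longrightarrow> (- x, - y) \<in> T"
  using lin_sc[of T x y "-1"] by (simp add: sc_neg1)
lemma lin_diff: "lin_rel T \<Longrightarrow> (x,y) \<in> T \<Longrightarrow> (u,v) \<in> T \<Longrightarrow> (x-u, y-v) \<in> T"
  using lin_add[of T x y "-u" "-v"] lin_neg[of T u v] by simp
lemma op_single: "is_op sc T \<Longrightarrow> (x,y) \<in> T \<Longrightarrow> (x,y') \<in> T \<Longrightarrow> y = y'"
proof -
  assume a: "is_op sc T" "(x,y) \<in> T" "(x,y') \<in> T"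
  hence "(0, y - y') \<in> T" using lin_diff[of T x y x y'] is_op_lin[of T] by simp
  moreover have "\<forall>y. (0,y)\<in>T \<longrightarrow> y = 0" using a(1) by (simp add: is_op_def)
  ultimately have "y - y' = 0" by blast
  thus ?thesis by simp
qed

lemma lin_comp: assumes l1: "lin_rel T1" and l2: "lin_rel T2" shows "lin_rel (T1 O T2)"
  unfolding lin_rel_def
proof (intro conjI allI impI)
  show "(0,0) \<in> T1 O T2" using lin_zero[OF l1] lin_zero[OF l2] by blast
next
  fix x y u v assume "(x, y) \<in> T1 O T2" "(u, v) \<in> T1 O T2"
  then obtain p q where "(x,p) \<in> T1" "(p,y) \<in> T2" "(u,q) \<in> T1" "(q,v) \<in> T2" by blast
  thus "(x + u, y + v) \<in> T1 O T2" using lin_add[OF l1, of x p u q] lin_add[OF l2, of p y q v] by blast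
next
  fix c x y assume "(x, y) \<in> T1 O T2"
  then obtain p where "(x,p) \<in> T1" "(p,y) \<in> T2" by blast
  thus "(sc c x, sc c y) \<in> T1 O T2" using lin_sc[OF l1, of x p c] lin_sc[OF l2, of p y c] by blast
qed

lemma op_comp: assumes o1: "is_op sc T1" and o2: "is_op sc T2" shows "is_op sc (T1 O T2)"
proof -
  have s1: "\<forall>y. (0, y) \<in> T1 \<longrightarrow> y = 0" and s2: "\<forall>y. (0, y) \<in> T2 \<longrightarrow> y = 0"
    using o1 o2 by (simp_all add: is_op_iff)
  have "lin_rel (T1 O T2)" using o1 o2 by (intro lin_comp) (simp_all add: is_op_iff)
  moreover have "\<forall>y. (0, y) \<in> T1 O T2 \<longrightarrow> y = 0"
  proof (intro allI impI)
    fix y assume "(0, y) \<in> T1 O T2"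
    then obtain p where "(0,p) \<in> T1" "(p,y) \<in> T2" by blast
    thus "y = 0" using s1 s2 by auto
  qed
  ultimately show ?thesis by (simp add: is_op_iff)
qed

lemma lin_Id: "lin_rel Id" by (simp add: lin_rel_def)

lemma lin_pow: "lin_rel T \<Longrightarrow> lin_rel (T ^^ k)"
proof (induction k)
  case 0 thus ?case by (simp add: lin_Id)
next
  case (Suc k) thus ?case using lin_comp[of "T ^^ k" T] by simp
qed

lemma op_diff_op: "is_op sc T1 \<Longrightarrow> is_op sc T2 \<Longrightarrow> is_op sc (op_diff T1 T2)"
proof -
  assume o1: "is_op sc T1" and o2: "is_op sc T2"
  have l1: "lin_rel T1" and l2: "lin_rel T2" using o1 o2 is_op_lin by auto
  show ?thesis unfolding is_op_iff lin_rel_def op_diff_def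
  proof (intro conjI allI impI)
    show "(0, 0) \<in> {(x, u - v) |x u v. (x, u) \<in> T1 \<and> (x, v) \<in> T2}"
      using lin_zero[OF l1] lin_zero[OF l2] by force
  next
    fix x y u v
    assume "(x, y) \<in> {(x, u - v) |x u v. (x, u) \<in> T1 \<and> (x, v) \<in> T2}"
       "(u, v) \<in> {(x, u - v) |x u v. (x, u) \<in> T1 \<and> (x, v) \<in> T2}"
    then obtain p1 q1 p2 q2 where "y = p1 - q1" "(x,p1)\<in>T1" "(x,q1)\<in>T2" "v = p2 - q2" "(u,p2)\<in>T1" "(u,q2)\<in>T2"
      by blast
    thus "(x + u, y + v) \<in> {(x, u - v) |x u v. (x, u) \<in> T1 \<and> (x, v) \<in> T2}"
      using lin_add[OF l1, of x p1 u p2] lin_add[OF l2, of x q1 u q2]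
      by (auto intro!: exI[of _ "p1+p2"] exI[of _ "q1+q2"] simp: algebra_simps)
  next
    fix c x y
    assume "(x, y) \<in> {(x, u - v) |x u v. (x, u) \<in> T1 \<and> (x, v) \<in> T2}"
    then obtain p1 q1 where "y = p1 - q1" "(x,p1)\<in>T1" "(x,q1)\<in>T2" by blast
    moreover have "sc c y = sc c p1 - sc c q1" using \<open>y = p1 - q1\<close> by (simp add: sc_diff_right)
    ultimately show "(sc c x, sc c y) \<in> {(x, u - v) |x u v. (x, u) \<in> T1 \<and> (x, v) \<in> T2}"
      using lin_sc[OF l1, of x p1 c] lin_sc[OF l2, of x q1 c] by blast
  next
    fix y assume "(0, y) \<in> {(x, u - v) |x u v. (x, u) \<in> T1 \<and> (x, v) \<in> T2}"
    then obtain p1 q1 where "y = p1 - q1" "(0,p1)\<in>T1" "(0,q1)\<in>T2" by blast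
    note pq = this
    have "\<forall>y. (0,y)\<in>T1 \<longrightarrow> y = 0" "\<forall>y. (0,y)\<in>T2 \<longrightarrow> y = 0" using o1 o2 by (simp_all add: is_op_def)
    hence "p1 = 0" "q1 = 0" using pq by blast+
    thus "y = 0" using pq by simp
  qed
qed

lemma closure_op:
  assumes o: "is_op sc T" and sv: "\<And>y. (0, y) \<in> closure T \<Longrightarrow> y = 0"
  shows "is_op sc (closure T)"
proof -
  have l: "lin_rel T" using o is_op_lin by auto
  have "lin_rel (closure T)" unfolding lin_rel_def
  proof (intro conjI allI impI)
    show "(0,0) \<in> closure T" using lin_zero[OF l] closure_subset by blast
  next
    fix x y u v assume a: "(x, y) \<in> closure T" "(u, v) \<in> closure T"
    from a(1) obtain X where X: "\<forall>n. X n \<in> T" "X \<longlonglongrightarrow> (x,y)"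
      unfolding closure_sequential by blast
    from a(2) obtain U where U: "\<forall>n. U n \<in> T" "U \<longlonglongrightarrow> (u,v)"
      unfolding closure_sequential by blast
    have "X n + U n \<in> T" for n
    proof -
      have "(fst (X n) + fst (U n), snd (X n) + snd (U n)) \<in> T"
        using X(1) U(1) by (intro lin_add[OF l]) simp_all
      moreover have "X n + U n = (fst (X n) + fst (U n), snd (X n) + snd (U n))"
        by (simp add: prod_eq_iff)
      ultimately show ?thesis by simp
    qed
    moreover have "(\<lambda>n. X n + U n) \<longlonglongrightarrow> (x,y) + (u,v)" by (intro tendsto_add X U)
    ultimately have "\<exists>W. (\<forall>n. W n \<in> T) \<and> W \<longlonglongrightarrow> (x + u, y + v)"
      by (intro exI[of _ "\<lambda>n. X n + U n"]) simp
    thus "(x + u, y + v) \<in> closure T" unfolding closure_sequential .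
  next
    fix c x y assume a: "(x, y) \<in> closure T"
    then obtain X where X: "\<forall>n. X n \<in> T" "X \<longlonglongrightarrow> (x,y)"
      unfolding closure_sequential by blast
    have "(sc c (fst (X n)), sc c (snd (X n))) \<in> T" for n
      using X(1) by (intro lin_sc[OF l]) simp
    moreover have "(\<lambda>n. (sc c (fst (X n)), sc c (snd (X n)))) \<longlonglongrightarrow> (sc c x, sc c y)"
    proof (intro tendsto_Pair tendsto_sc)
      show "(\<lambda>n. fst (X n)) \<longlonglongrightarrow> x" using tendsto_fst[OF X(2)] by simp
      show "(\<lambda>n. snd (X n)) \<longlonglongrightarrow> y" using tendsto_snd[OF X(2)] by simp
    qed
    ultimately have "\<exists>W. (\<forall>n. W n \<in> T) \<and> W \<longlonglongrightarrow> (sc c x, sc c y)"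
      by (intro exI[of _ "\<lambda>n. (sc c (fst (X n)), sc c (snd (X n)))"]) simp
    thus "(sc c x, sc c y) \<in> closure T" unfolding closure_sequential .
  qed
  thus ?thesis using sv by (simp add: is_op_iff)
qed

lemma dom_iff: "x \<in> op_dom T \<longleftrightarrow> (\<exists>y. (x,y) \<in> T)"
  unfolding op_dom_def Domain_fst[symmetric] by (rule Domain_iff)

lemma pow_dom_mono: "op_dom (T ^^ Suc k) \<subseteq> op_dom (T ^^ k)"
proof
  fix x assume "x \<in> op_dom (T ^^ Suc k)"
  then obtain y where "(x,y) \<in> T ^^ k O T" by (auto simp: dom_iff)
  then obtain w where "(x,w) \<in> T ^^ k" by blast
  thus "x \<in> op_dom (T ^^ k)" by (auto simp: dom_iff)
qed

lemma pow_dom_mono': "k \<le> j \<Longrightarrow> op_dom (T ^^ j) \<subseteq> op_dom (T ^^ k)"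
proof (induction j rule: dec_induct)
  case base thus ?case by simp
next
  case (step j) thus ?case using pow_dom_mono[where T=T and k=j] by blast
qed

lemma dom_add: assumes "lin_rel T" "x \<in> op_dom T" "y \<in> op_dom T" shows "x + y \<in> op_dom T"
proof -
  obtain x' y' where "(x,x') \<in> T" "(y,y') \<in> T" using assms(2,3) by (auto simp: dom_iff)
  hence "(x+y, x'+y') \<in> T" by (rule lin_add[OF assms(1)])
  thus ?thesis by (auto simp: dom_iff)
qed
lemma dom_sc: assumes "lin_rel T" "x \<in> op_dom T" shows "sc c x \<in> op_dom T"
proof -
  obtain x' where "(x,x') \<in> T" using assms(2) by (auto simp: dom_iff)
  hence "(sc c x, sc c x') \<in> T" by (rule lin_sc[OF assms(1)])
  thus ?thesis by (auto simp: dom_iff)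
qed
lemma dom_Id: "x \<in> op_dom Id" by (simp add: dom_iff)

lemma pow_dom_step:
  assumes l: "lin_rel T" and g: "\<And>y. (g y, y + sc c (g y)) \<in> T"
  shows "y \<in> op_dom (T ^^ k) \<Longrightarrow> g y \<in> op_dom (T ^^ Suc k)"
proof (induction k arbitrary: y)
  case 0
  have "(g y, y + sc c (g y)) \<in> T ^^ Suc 0" using g[of y] by simp
  thus ?case unfolding dom_iff by blast
next
  case (Suc k)
  have "y \<in> op_dom (T ^^ k)" by (rule subsetD[OF pow_dom_mono Suc.prems])
  hence "g y \<in> op_dom (T ^^ Suc k)" by (rule Suc.IH)
  hence "y + sc c (g y) \<in> op_dom (T ^^ Suc k)"
    using Suc.prems lin_pow[OF l, of "Suc k"] by (intro dom_add dom_sc) (simp_all del: relpow.simps)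
  then obtain w where "(y + sc c (g y), w) \<in> T ^^ Suc k" by (auto simp: dom_iff)
  hence "(g y, w) \<in> T O T ^^ Suc k" using g[of y] by blast
  moreover have "T O T ^^ Suc k = T ^^ Suc (Suc k)"
    by (subst relpow.simps(2)[of "Suc k"]) (rule relpow_commute)
  ultimately have "(g y, w) \<in> T ^^ Suc (Suc k)" by simp
  thus ?case unfolding dom_iff by blast
qed

lemma pow_dom_range:
  assumes l: "lin_rel T" and g: "\<And>y. (g y, y + sc c (g y)) \<in> T"
  shows "k \<le> j \<Longrightarrow> (g ^^ j) y \<in> op_dom (T ^^ k)"
proof (induction j arbitrary: k)
  case 0 thus ?case by (simp add: dom_Id)
next
  case (Suc j)
  show ?case
  proof (cases k)
    case 0 thus ?thesis by (simp add: dom_Id)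
  next
    case (Suc k')
    hence "(g ^^ j) y \<in> op_dom (T ^^ k')" using Suc.IH Suc.prems by simp
    hence "g ((g ^^ j) y) \<in> op_dom (T ^^ Suc k')" by (rule pow_dom_step[OF l g])
    thus ?thesis using Suc by simp
  qed
qed

lemma op_bdd:
  assumes b: "bounded_op T" shows "bdd_above {norm y | x y. (x, y) \<in> T \<and> norm x \<le> 1}"
proof -
  obtain c where c: "c \<ge> 0" "\<And>x y. (x,y) \<in> T \<Longrightarrow> norm y \<le> c * norm x"
    using b by (auto simp: bounded_op_def)
  show ?thesis
  proof (rule bdd_aboveI[of _ c])
    fix t assume "t \<in> {norm y | x y. (x, y) \<in> T \<and> norm x \<le> 1}"
    then obtain x y where xy: "t = norm y" "(x,y) \<in> T" "norm x \<le> 1" by blast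
    have "norm y \<le> c * norm x" by (rule c(2)[OF xy(2)])
    also have "\<dots> \<le> c * 1" by (rule mult_left_mono[OF xy(3) c(1)])
    finally show "t \<le> c" using xy(1) by simp
  qed
qed

lemma op_norm_nonneg: "is_op sc T \<Longrightarrow> bounded_op T \<Longrightarrow> 0 \<le> op_norm T"
proof -
  assume o: "is_op sc T" and b: "bounded_op T"
  have "(0,0) \<in> T" using o by (simp add: is_op_def)
  hence "norm (0::'a) \<in> {norm y | x y. (x, y) \<in> T \<and> norm x \<le> 1}" by force
  hence "norm (0::'a) \<le> op_norm T" unfolding op_norm_def by (rule cSup_upper[OF _ op_bdd[OF b]])
  thus ?thesis by simp
qed

lemma op_norm_bound:
  assumes o: "is_op sc T" and b: "bounded_op T" and xy: "(x, y) \<in> T"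
  shows "norm y \<le> op_norm T * norm x"
proof (cases "x = 0")
  case True
  hence "y = 0" using xy o by (simp add: is_op_def)
  thus ?thesis using True by simp
next
  case False
  define s where "s = 1 / norm x"
  have "(sc (of_real s) x, sc (of_real s) y) \<in> T" using o xy by (simp add: is_op_def)
  hence "(s *\<^sub>R x, s *\<^sub>R y) \<in> T" by (simp add: sc_real)
  moreover have "norm (s *\<^sub>R x) \<le> 1" using False by (simp add: s_def)
  ultimately have "norm (s *\<^sub>R y) \<in> {norm y | x y. (x, y) \<in> T \<and> norm x \<le> 1}" by blast
  hence "norm (s *\<^sub>R y) \<le> op_norm T" unfolding op_norm_def by (rule cSup_upper[OF _ op_bdd[OF b]])
  thus ?thesis using False by (simp add: s_def field_simps)
qed

lemma op_norm_le:
  assumes o: "is_op sc T" and K: "0 \<le> K" and h: "\<And>x y. (x, y) \<in> T \<Longrightarrow> norm y \<le> K * norm x"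
  shows "op_norm T \<le> K"
  unfolding op_norm_def
proof (rule cSup_least)
  have "(0,0) \<in> T" using o by (simp add: is_op_def)
  thus "{norm y |x y. (x, y) \<in> T \<and> norm x \<le> 1} \<noteq> {}" by force
next
  fix t assume "t \<in> {norm y |x y. (x, y) \<in> T \<and> norm x \<le> 1}"
  then obtain x y where "t = norm y" "(x,y) \<in> T" "norm x \<le> 1" by blast
  have "norm y \<le> K * norm x" by (rule h) fact
  also have "\<dots> \<le> K * 1" by (rule mult_left_mono) fact+
  finally show "t \<le> K" using \<open>t = norm y\<close> by simp
qed


lemma op_pow_op: "is_op sc T \<Longrightarrow> is_op sc (T ^^ k)"
proof (induction k)
  case 0
  have "lin_rel (Id :: ('a \<times> 'a) set)" by (rule lin_Id)
  thus ?case by (simp add: is_op_iff)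
next
  case (Suc k) thus ?case using op_comp[of "T ^^ k" T] by simp
qed

end

locale setting = hilb sc ip for sc :: "complex \<Rightarrow> 'a::banach \<Rightarrow> 'a" and ip +
  fixes A S :: "('a \<times> 'a) set" and z :: complex and m :: nat
  assumes A_cl: "closable sc A" and A_dd: "densely_defined A"
    and S_cl: "closed_op sc S" and S_dd: "densely_defined S"
    and z_res: "z \<in> resolvent_set sc S"
    and dom1: "op_dom (op_pow S m) \<subseteq> op_dom (op_closure A)"
    and dom2: "op_dom (op_pow (adjoint ip S) m) \<subseteq> op_dom (adjoint ip A)"
begin

definition "R = op_inverse (op_shift sc S z)"
definition "Ab = op_closure A"
definition "r x = (THE y. (x,y) \<in> R)"
definition "a x = (THE y. (x,y) \<in> Ab)"
definition "as u = (SOME w. (u,w) \<in> adjoint ip A)"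
definition "rs y = (SOME w. \<forall>x. ip (r x) y = ip x w)"
definition "cR = op_norm R"

lemma R_all: "is_op sc R \<and> op_dom R = UNIV \<and> bounded_op R"
  using z_res unfolding resolvent_set_def R_def by (rule CollectD)
lemma R_op: "is_op sc R" and R_dom: "op_dom R = UNIV" and R_bdd: "bounded_op R"
  using R_all by simp_all

lemma S_op: "is_op sc S" using S_cl by (simp add: closed_op_def)

lemma R_mem: "(x, r x) \<in> R"
proof -
  have "x \<in> op_dom R" using R_dom by simp
  then obtain y where y: "(x,y) \<in> R" by (auto simp: dom_iff)
  have "(THE y. (x,y) \<in> R) = y"
  proof (rule the_equality)
    show "(x,y) \<in> R" by (rule y)
    fix y' assume "(x,y') \<in> R" thus "y' = y" using op_single[OF R_op y] by simp
  qed
  thus ?thesis using y by (simp add: r_def)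
qed

lemma R_eq: "(x,y) \<in> R \<longleftrightarrow> y = r x"
proof
  assume "(x,y) \<in> R" thus "y = r x" using op_single[OF R_op _ R_mem, of x y] by simp
next
  assume "y = r x" thus "(x,y) \<in> R" using R_mem by simp
qed

lemma r_add: "r (x + y) = r x + r y"
  using lin_add[OF is_op_lin[OF R_op] R_mem R_mem] by (simp add: R_eq)
lemma r_sc: "r (sc c x) = sc c (r x)"
  using lin_sc[OF is_op_lin[OF R_op] R_mem] by (simp add: R_eq)
lemma r_diff: "r (x - y) = r x - r y"
  using lin_diff[OF is_op_lin[OF R_op] R_mem R_mem] by (simp add: R_eq)
lemma r_zero: "r 0 = 0" using r_diff[of 0 0] by simp

lemma cR0: "0 \<le> cR" unfolding cR_def by (rule op_norm_nonneg[OF R_op R_bdd])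
lemma r_bound: "norm (r x) \<le> cR * norm x"
  unfolding cR_def by (rule op_norm_bound[OF R_op R_bdd R_mem])

lemma r_S: "(r x, x + sc z (r x)) \<in> S"
proof -
  have "(r x, x) \<in> op_shift sc S z" using R_mem[of x] by (simp add: R_def op_inverse_def)
  then obtain x' y' where e: "(r x, x) = (x', y' - sc z x')" and xy: "(x', y') \<in> S"
    unfolding op_shift_def by blast
  have ee: "r x = x' \<and> x = y' - sc z x'" using e unfolding prod.inject .
  have e1: "x' = r x" using ee by (metis conjunct1)
  have "x = y' - sc z x'" using ee by (rule conjunct2)
  hence "y' = x + sc z (r x)" using e1 by (simp add: algebra_simps)
  thus ?thesis using xy e1 by simp
qed

lemma r_inj: "r v = 0 \<Longrightarrow> v = 0"
  using r_S[of v] S_op by (simp add: is_op_def)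

lemma dom_S_range: "op_dom S \<subseteq> range r"
proof
  fix x assume "x \<in> op_dom S"
  then obtain v where v: "(x,v) \<in> S" by (auto simp: dom_iff)
  hence "(x, v - sc z x) \<in> op_shift sc S z" unfolding op_shift_def by blast
  hence "(v - sc z x, x) \<in> R" by (simp add: R_def op_inverse_def)
  hence "x = r (v - sc z x)" by (simp add: R_eq)
  thus "x \<in> range r" by blast
qed

lemma Rpow_eq: "(x,y) \<in> R ^^ k \<longleftrightarrow> y = (r ^^ k) x"
proof (induction k arbitrary: y)
  case 0 thus ?case by auto
next
  case (Suc k)
  have "(x,y) \<in> R ^^ Suc k \<longleftrightarrow> (\<exists>w. (x,w) \<in> R ^^ k \<and> (w,y) \<in> R)" by auto
  also have "\<dots> \<longleftrightarrow> y = r ((r ^^ k) x)" using Suc.IH by (auto simp: R_eq)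
  finally show ?case by simp
qed

lemma rk_diff: "(r ^^ k) (x - y) = (r ^^ k) x - (r ^^ k) y"
  by (induction k) (simp_all add: r_diff)
lemma rk_bound: "norm ((r ^^ k) x) \<le> cR ^ k * norm x"
proof (induction k)
  case 0 thus ?case by simp
next
  case (Suc k)
  have "norm ((r ^^ Suc k) x) \<le> cR * norm ((r ^^ k) x)" using r_bound by simp
  also have "\<dots> \<le> cR * (cR ^ k * norm x)" by (rule mult_left_mono[OF Suc.IH cR0])
  finally show ?case by (simp add: mult.assoc)
qed
lemma rk_inj: "(r ^^ k) v = 0 \<Longrightarrow> v = 0"
  by (induction k) (auto dest: r_inj)

lemma r_bl: "bounded_linear r"
proof (rule bounded_linear_intro[where K=cR])
  show "r (x + y) = r x + r y" for x y by (rule r_add)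
  show "r (c *\<^sub>R x) = c *\<^sub>R r x" for c x using r_sc[of "of_real c" x] by (simp add: sc_real)
  show "norm (r x) \<le> norm x * cR" for x using r_bound by (simp add: mult.commute)
qed

lemma r_cont: "continuous_on X r"
  using bounded_linear.continuous_on[OF r_bl continuous_on_id] by simp

lemma dense_range: "closure (range (r ^^ k)) = UNIV"
proof (induction k)
  case 0 thus ?case by simp
next
  case (Suc k)
  have "r ` closure (range (r ^^ k)) \<subseteq> closure (r ` range (r ^^ k))"
    by (rule image_closure_subset[OF r_cont]) (auto intro: closure_subset[THEN subsetD])
  hence "range r \<subseteq> closure (range (r ^^ Suc k))" using Suc.IH by (simp add: image_comp)
  hence "closure (range r) \<subseteq> closure (range (r ^^ Suc k))"
    by (metis closure_closure closure_mono)
  moreover have "closure (range r) = UNIV"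
    using S_dd closure_mono[OF dom_S_range] by (auto simp: densely_defined_def)
  ultimately show ?case by auto
qed

lemma Ab_op: "is_op sc Ab"
proof -
  obtain B where B: "closed_op sc B" "A \<subseteq> B" using A_cl by (auto simp: closable_def)
  have cA: "closure A \<subseteq> B" using B by (intro closure_minimal) (auto simp: closed_op_def)
  have sv: "y = 0" if "(0,y) \<in> closure A" for y
    using cA that B(1) by (auto simp: closed_op_def is_op_def)
  have "is_op sc A" using A_cl by (simp add: closable_def)
  thus ?thesis unfolding Ab_def op_closure_def using sv by (rule closure_op)
qed

lemma a_mem: "x \<in> op_dom Ab \<Longrightarrow> (x, a x) \<in> Ab"
proof -
  assume "x \<in> op_dom Ab"
  then obtain y where y: "(x,y) \<in> Ab" by (auto simp: dom_iff)
  have "(THE y. (x,y) \<in> Ab) = y"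
  proof (rule the_equality)
    show "(x,y) \<in> Ab" by (rule y)
    fix y' assume "(x,y') \<in> Ab" thus "y' = y" using op_single[OF Ab_op y] by simp
  qed
  thus ?thesis using y by (simp add: a_def)
qed
lemma a_eq: "(x,y) \<in> Ab \<Longrightarrow> y = a x"
proof -
  assume y: "(x,y) \<in> Ab"
  hence "x \<in> op_dom Ab" by (auto simp: dom_iff)
  thus ?thesis using op_single[OF Ab_op y a_mem] by simp
qed
lemma a_diff: "x \<in> op_dom Ab \<Longrightarrow> y \<in> op_dom Ab \<Longrightarrow> x - y \<in> op_dom Ab \<and> a (x - y) = a x - a y"
proof -
  assume "x \<in> op_dom Ab" "y \<in> op_dom Ab"
  hence "(x - y, a x - a y) \<in> Ab" using lin_diff[OF is_op_lin[OF Ab_op] a_mem a_mem] by blast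
  thus ?thesis using a_eq by (auto simp: dom_iff)
qed

lemma As_closure:
  assumes uw: "(u,w) \<in> adjoint ip A" and xv: "(x,v) \<in> Ab"
  shows "ip v u = ip x w"
proof -
  define C where "C = {p. ip (snd p) u = ip (fst p) w}"
  have "A \<subseteq> C" using uw by (auto simp: C_def adjoint_def)
  moreover have "closed C" unfolding closed_sequential_limits
  proof (intro allI impI)
    fix X l assume a: "(\<forall>n. X n \<in> C) \<and> X \<longlonglongrightarrow> l"
    have "(\<lambda>n. ip (snd (X n)) u) \<longlonglongrightarrow> ip (snd l) u" using a by (intro tendsto_ip_left tendsto_snd) simp
    moreover have "(\<lambda>n. ip (fst (X n)) w) \<longlonglongrightarrow> ip (fst l) w" using a by (intro tendsto_ip_left tendsto_fst) simp
    moreover have "(\<lambda>n. ip (snd (X n)) u) = (\<lambda>n. ip (fst (X n)) w)" using a by (auto simp: C_def)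
    ultimately have "ip (snd l) u = ip (fst l) w" using LIMSEQ_unique by metis
    thus "l \<in> C" by (simp add: C_def)
  qed
  ultimately have "closure A \<subseteq> C" by (rule closure_minimal)
  thus ?thesis using xv by (auto simp: C_def Ab_def op_closure_def)
qed

lemma as_mem: "u \<in> op_dom (adjoint ip A) \<Longrightarrow> (u, as u) \<in> adjoint ip A"
  unfolding as_def dom_iff by (rule someI_ex)

lemma rs_prop: "ip (r x) y = ip x (rs y)"
proof -
  have "\<exists>w. \<forall>x. ip y (r x) = ip w x"
  proof (rule riesz[where C="norm y * cR"])
    show "ip y (r (x + x')) = ip y (r x) + ip y (r x')" for x x' by (simp add: r_add ip_addr)
    show "ip y (r (sc c x)) = c * ip y (r x)" for c x by (simp add: r_sc ip_scr)
    show "cmod (ip y (r x)) \<le> norm y * cR * norm x" for x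
    proof -
      have "cmod (ip y (r x)) \<le> norm y * norm (r x)" by (rule cauchy_schwarz)
      also have "\<dots> \<le> norm y * (cR * norm x)" by (rule mult_left_mono[OF r_bound norm_ge_zero])
      finally show ?thesis by (simp add: mult.assoc)
    qed
  qed
  then obtain w where w: "\<forall>x. ip y (r x) = ip w x" by blast
  have "\<forall>x. ip (r x) y = ip x w" using w by (metis ip_sym)
  hence "\<exists>w. \<forall>x. ip (r x) y = ip x w" by blast
  hence "\<forall>x. ip (r x) y = ip x (rs y)" unfolding rs_def by (rule someI_ex)
  thus ?thesis by blast
qed

lemma rsk: "ip ((r ^^ k) x) y = ip x ((rs ^^ k) y)"
proof (induction k arbitrary: y)
  case 0 thus ?case by simp
next
  case (Suc k)
  have "ip ((r ^^ Suc k) x) y = ip ((r ^^ k) x) (rs y)" by (simp add: rs_prop)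
  also have "\<dots> = ip x ((rs ^^ k) (rs y))" by (rule Suc.IH)
  also have "\<dots> = ip x ((rs ^^ Suc k) y)" by (simp only: funpow_Suc_right comp_def)
  finally show ?case .
qed

lemma rs_Sa: "(rs y, y + sc (cnj z) (rs y)) \<in> adjoint ip S"
  unfolding adjoint_def
proof (intro CollectI case_prodI allI impI)
  fix x v assume xv: "(x,v) \<in> S"
  hence "(x, v - sc z x) \<in> op_shift sc S z" unfolding op_shift_def by blast
  hence "(v - sc z x, x) \<in> R" by (simp add: R_def op_inverse_def)
  hence "x = r (v - sc z x)" by (simp add: R_eq)
  hence "ip x y = ip (v - sc z x) (rs y)" using rs_prop by metis
  hence "ip x y = ip v (rs y) - cnj z * ip x (rs y)" by (simp add: ip_diffl ip_scl)
  thus "ip v (rs y) = ip x (y + sc (cnj z) (rs y))" by (simp add: ip_addr ip_scr)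
qed

lemma Sa_lin: "lin_rel (adjoint ip S)"
  unfolding lin_rel_def adjoint_def
  by (simp add: ip_addr ip_scr)

lemma dom_r: "k \<le> j \<Longrightarrow> (r ^^ j) y \<in> op_dom (S ^^ k)"
  by (rule pow_dom_range[OF is_op_lin[OF S_op] r_S])
lemma dom_rs: "k \<le> j \<Longrightarrow> (rs ^^ j) y \<in> op_dom (adjoint ip S ^^ k)"
  by (rule pow_dom_range[OF Sa_lin rs_Sa])

lemma range_ok: "((r ^^ k) ((r ^^ m) t)) \<in> op_dom Ab"
proof -
  have "(r ^^ k) ((r ^^ m) t) = (r ^^ (k + m)) t" by (simp add: funpow_add)
  also have "\<dots> \<in> op_dom (S ^^ m)" by (rule dom_r) simp
  finally show ?thesis using dom1 by (auto simp: op_pow_def Ab_def)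
qed
lemma range_ok_s: "((rs ^^ k) ((rs ^^ m) t)) \<in> op_dom (adjoint ip A)"
proof -
  have "(rs ^^ k) ((rs ^^ m) t) = (rs ^^ (k + m)) t" by (simp add: funpow_add)
  also have "\<dots> \<in> op_dom (adjoint ip S ^^ m)" by (rule dom_rs) simp
  finally show ?thesis using dom2 by (auto simp: op_pow_def)
qed

lemma perp: "(\<And>t. ip v ((rs ^^ m) t) = 0) \<Longrightarrow> v = 0"
proof -
  assume h: "\<And>t. ip v ((rs ^^ m) t) = 0"
  have "ip ((r ^^ m) v) ((r ^^ m) v) = 0" using h rsk by metis
  hence "(r ^^ m) v = 0" by (rule ip_self_zero)
  thus "v = 0" by (rule rk_inj)
qed


lemma comp1: "(x,u) \<in> Ab O R ^^ k \<longleftrightarrow> x \<in> op_dom Ab \<and> u = (r ^^ k) (a x)"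
proof
  assume "(x,u) \<in> Ab O R ^^ k"
  then obtain b where b: "(x,b) \<in> Ab" "(b,u) \<in> R ^^ k" by (rule relcompE) simp
  have "b = a x" using a_eq[OF b(1)] .
  moreover have "u = (r ^^ k) b" using b(2) by (simp add: Rpow_eq)
  moreover have "x \<in> op_dom Ab" using b(1) by (auto simp: dom_iff)
  ultimately show "x \<in> op_dom Ab \<and> u = (r ^^ k) (a x)" by simp
next
  assume h: "x \<in> op_dom Ab \<and> u = (r ^^ k) (a x)"
  have "(x, a x) \<in> Ab" using h a_mem by simp
  moreover have "(a x, u) \<in> R ^^ k" using h by (simp add: Rpow_eq)
  ultimately show "(x,u) \<in> Ab O R ^^ k" by (rule relcompI)
qed

lemma comp2: "(x,v) \<in> R ^^ k O Ab \<longleftrightarrow> (r ^^ k) x \<in> op_dom Ab \<and> v = a ((r ^^ k) x)"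
proof
  assume "(x,v) \<in> R ^^ k O Ab"
  then obtain b where b: "(x,b) \<in> R ^^ k" "(b,v) \<in> Ab" by (rule relcompE) simp
  have "b = (r ^^ k) x" using b(1) by (simp add: Rpow_eq)
  moreover have "v = a b" using a_eq[OF b(2)] .
  moreover have "b \<in> op_dom Ab" using b(2) by (auto simp: dom_iff)
  ultimately show "(r ^^ k) x \<in> op_dom Ab \<and> v = a ((r ^^ k) x)" by simp
next
  assume h: "(r ^^ k) x \<in> op_dom Ab \<and> v = a ((r ^^ k) x)"
  have "(x, (r ^^ k) x) \<in> R ^^ k" by (simp add: Rpow_eq)
  moreover have "((r ^^ k) x, v) \<in> Ab" using h a_mem by simp
  ultimately show "(x,v) \<in> R ^^ k O Ab" by (rule relcompI)
qed

lemma ad_mem: "(x,y) \<in> ad (R ^^ k) Ab \<longleftrightarrow>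
   x \<in> op_dom Ab \<and> (r ^^ k) x \<in> op_dom Ab \<and> y = (r ^^ k) (a x) - a ((r ^^ k) x)"
proof -
  have "(x,y) \<in> ad (R ^^ k) Ab \<longleftrightarrow> (\<exists>u v. y = u - v \<and> (x,u) \<in> Ab O R ^^ k \<and> (x,v) \<in> R ^^ k O Ab)"
    unfolding ad_def op_diff_def op_mult_def by blast
  also have "\<dots> \<longleftrightarrow> x \<in> op_dom Ab \<and> (r ^^ k) x \<in> op_dom Ab \<and> y = (r ^^ k) (a x) - a ((r ^^ k) x)"
    unfolding comp1 comp2 by blast
  finally show ?thesis .
qed

definition "W j u = as ((rs ^^ j) u) - (rs ^^ j) (as u)"

lemma weak:
  assumes h1: "x \<in> op_dom Ab" and h2: "(r ^^ j) x \<in> op_dom Ab"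
    and h3: "u \<in> op_dom (adjoint ip A)" and h4: "(rs ^^ j) u \<in> op_dom (adjoint ip A)"
  shows "ip ((r ^^ j) (a x) - a ((r ^^ j) x)) u = ip x (W j u)"
proof -
  have 1: "ip ((r ^^ j) (a x)) u = ip x (as ((rs ^^ j) u))"
  proof -
    have "ip ((r ^^ j) (a x)) u = ip (a x) ((rs ^^ j) u)" by (rule rsk)
    also have "\<dots> = ip x (as ((rs ^^ j) u))" by (rule As_closure[OF as_mem[OF h4] a_mem[OF h1]])
    finally show ?thesis .
  qed
  have 2: "ip (a ((r ^^ j) x)) u = ip x ((rs ^^ j) (as u))"
  proof -
    have "ip (a ((r ^^ j) x)) u = ip ((r ^^ j) x) (as u)" by (rule As_closure[OF as_mem[OF h3] a_mem[OF h2]])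
    also have "\<dots> = ip x ((rs ^^ j) (as u))" by (rule rsk)
    finally show ?thesis .
  qed
  show ?thesis by (simp add: W_def ip_diffl ip_diffr 1 2)
qed

lemma ad_weak: "(x,y) \<in> ad (R ^^ j) Ab \<Longrightarrow> ip y ((rs ^^ m) t) = ip x (W j ((rs ^^ m) t))"
proof -
  assume "(x,y) \<in> ad (R ^^ j) Ab"
  hence h: "x \<in> op_dom Ab" "(r ^^ j) x \<in> op_dom Ab" "y = (r ^^ j) (a x) - a ((r ^^ j) x)"
    by (simp_all add: ad_mem)
  have h3: "(rs ^^ m) t \<in> op_dom (adjoint ip A)" using range_ok_s[of 0 t] by simp
  have h4: "(rs ^^ j) ((rs ^^ m) t) \<in> op_dom (adjoint ip A)" by (rule range_ok_s)
  show ?thesis using weak[OF h(1,2) h3 h4] h(3) by simp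
qed

lemma ad_sv: "(0,y) \<in> closure (ad (R ^^ j) Ab) \<Longrightarrow> y = 0"
proof -
  assume "(0,y) \<in> closure (ad (R ^^ j) Ab)"
  then obtain X where X: "\<forall>n. X n \<in> ad (R ^^ j) Ab" "X \<longlonglongrightarrow> (0,y)"
    unfolding closure_sequential by blast
  show "y = 0"
  proof (rule perp)
    fix t
    define u where "u = (rs ^^ m) t"
    have eq: "ip (snd (X n)) u = ip (fst (X n)) (W j u)" for n
    proof -
      have "(fst (X n), snd (X n)) \<in> ad (R ^^ j) Ab" using X(1) by simp
      thus ?thesis unfolding u_def by (rule ad_weak)
    qed
    have l1: "(\<lambda>n. ip (snd (X n)) u) \<longlonglongrightarrow> ip y u"
      using tendsto_ip_left[OF tendsto_snd[OF X(2)]] by simp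
    have "(\<lambda>n. ip (fst (X n)) (W j u)) \<longlonglongrightarrow> ip 0 (W j u)"
      using tendsto_ip_left[OF tendsto_fst[OF X(2)]] by simp
    hence l2: "(\<lambda>n. ip (snd (X n)) u) \<longlonglongrightarrow> 0" using eq by simp
    show "ip y ((rs ^^ m) t) = 0" using LIMSEQ_unique[OF l1 l2] by (simp add: u_def)
  qed
qed

lemma ad_op: "is_op sc (ad (R ^^ j) Ab)"
  unfolding ad_def op_mult_def
  by (intro op_diff_op op_comp op_pow_op R_op Ab_op)

lemma ad_closable: "closable sc (ad (R ^^ j) Ab)"
  unfolding closable_def
proof (intro conjI exI)
  show "is_op sc (ad (R ^^ j) Ab)" by (rule ad_op)
  show "closed_op sc (closure (ad (R ^^ j) Ab))"
    unfolding closed_op_def using closure_op[OF ad_op ad_sv] by simp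
  show "ad (R ^^ j) Ab \<subseteq> closure (ad (R ^^ j) Ab)" by (rule closure_subset)
qed

lemma ad_dense: "densely_defined (ad (R ^^ Suc 0) Ab)"
proof -
  have "range (r ^^ m) \<subseteq> op_dom (ad (R ^^ Suc 0) Ab)"
  proof
    fix x assume "x \<in> range (r ^^ m)"
    then obtain t where t: "x = (r ^^ m) t" by blast
    have "x \<in> op_dom Ab" using range_ok[of 0 t] t by simp
    moreover have "(r ^^ Suc 0) x \<in> op_dom Ab" using range_ok[of "Suc 0" t] t by simp
    ultimately have "(x, (r ^^ Suc 0) (a x) - a ((r ^^ Suc 0) x)) \<in> ad (R ^^ Suc 0) Ab"
      by (simp only: ad_mem)
    thus "x \<in> op_dom (ad (R ^^ Suc 0) Ab)" by (auto simp: dom_iff)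
  qed
  hence "closure (range (r ^^ m)) \<subseteq> closure (op_dom (ad (R ^^ Suc 0) Ab))" by (rule closure_mono)
  thus ?thesis using dense_range by (auto simp: densely_defined_def)
qed


definition "c1 = op_norm (ad (R ^^ Suc 0) Ab)"

lemma d1:
  assumes b: "bounded_op (ad (R ^^ Suc 0) Ab)" and hx: "x \<in> op_dom Ab" "r x \<in> op_dom Ab"
  shows "norm (r (a x) - a (r x)) \<le> c1 * norm x"
proof -
  have "(x, (r ^^ Suc 0) (a x) - a ((r ^^ Suc 0) x)) \<in> ad (R ^^ Suc 0) Ab"
    unfolding ad_mem using hx by simp
  hence "(x, r (a x) - a (r x)) \<in> ad (R ^^ Suc 0) Ab" by simp
  thus ?thesis unfolding c1_def by (rule op_norm_bound[OF ad_op b])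
qed

lemma c10: "bounded_op (ad (R ^^ Suc 0) Ab) \<Longrightarrow> 0 \<le> c1"
  unfolding c1_def by (rule op_norm_nonneg[OF ad_op])

lemma tele:
  assumes b: "bounded_op (ad (R ^^ Suc 0) Ab)"
  shows "(\<forall>k. (r ^^ k) x \<in> op_dom Ab) \<Longrightarrow>
    norm ((r ^^ j) (a x) - a ((r ^^ j) x)) \<le> real j * cR ^ (j - 1) * c1 * norm x"
proof (induction j arbitrary: x)
  case 0 thus ?case by simp
next
  case (Suc j)
  have hx: "x \<in> op_dom Ab" using Suc.prems[rule_format, of 0] by simp
  have hrx: "r x \<in> op_dom Ab" using Suc.prems[rule_format, of "Suc 0"] by simp
  have good: "\<forall>k. (r ^^ k) (r x) \<in> op_dom Ab"
  proof
    fix k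
    have e: "(r ^^ k) (r x) = (r ^^ Suc k) x" by (simp only: funpow_Suc_right comp_def)
    have "(r ^^ Suc k) x \<in> op_dom Ab" using Suc.prems by blast
    thus "(r ^^ k) (r x) \<in> op_dom Ab" by (simp only: e)
  qed
  have IH: "norm ((r ^^ j) (a (r x)) - a ((r ^^ j) (r x))) \<le> real j * cR ^ (j - 1) * c1 * norm (r x)"
    using Suc.IH good by blast
  have e1: "(r ^^ Suc j) v = (r ^^ j) (r v)" for v by (simp only: funpow_Suc_right comp_def)
  have eq: "(r ^^ Suc j) (a x) - a ((r ^^ Suc j) x)
      = (r ^^ j) (r (a x) - a (r x)) + ((r ^^ j) (a (r x)) - a ((r ^^ j) (r x)))"
    unfolding e1 rk_diff by simp
  have c1p: "0 \<le> c1" by (rule c10[OF b])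
  have t1: "norm ((r ^^ j) (r (a x) - a (r x))) \<le> cR ^ j * (c1 * norm x)"
  proof -
    have "norm ((r ^^ j) (r (a x) - a (r x))) \<le> cR ^ j * norm (r (a x) - a (r x))" by (rule rk_bound)
    also have "\<dots> \<le> cR ^ j * (c1 * norm x)"
      by (rule mult_left_mono[OF d1[OF b hx hrx]]) (simp add: cR0)
    finally show ?thesis .
  qed
  have t2: "real j * cR ^ (j - 1) * c1 * norm (r x) \<le> real j * cR ^ (j - 1) * c1 * (cR * norm x)"
    by (rule mult_left_mono[OF r_bound]) (simp add: cR0 c1p)
  have "norm ((r ^^ Suc j) (a x) - a ((r ^^ Suc j) x))
      \<le> norm ((r ^^ j) (r (a x) - a (r x))) + norm ((r ^^ j) (a (r x)) - a ((r ^^ j) (r x)))"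
    unfolding eq by (rule norm_triangle_ineq)
  also have "\<dots> \<le> cR ^ j * (c1 * norm x) + real j * cR ^ (j - 1) * c1 * (cR * norm x)"
    using t1 IH t2 by linarith
  also have "\<dots> = real (Suc j) * cR ^ (Suc j - 1) * c1 * norm x"
  proof (cases j)
    case 0 thus ?thesis by simp
  next
    case (Suc i) thus ?thesis by (simp add: algebra_simps)
  qed
  finally show ?case .
qed

definition "K = real m * cR ^ (m - 1) * c1"

lemma main_bound:
  assumes b: "bounded_op (ad (R ^^ Suc 0) Ab)" and xy: "(x,y) \<in> ad (R ^^ m) Ab"
  shows "norm y \<le> K * norm x"
proof -
  define D where "D v = (r ^^ m) (a v) - a ((r ^^ m) v)" for v
  have K0: "0 \<le> K" unfolding K_def using cR0 c10[OF b] by simp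
  have hxy: "x \<in> op_dom Ab" "(r ^^ m) x \<in> op_dom Ab" "y = D x"
    using xy by (simp_all add: ad_mem D_def)
  have "x \<in> closure (range (r ^^ m))" using dense_range by simp
  then obtain X where X: "\<forall>n. X n \<in> range (r ^^ m)" "X \<longlonglongrightarrow> x"
    unfolding closure_sequential by blast
  have good: "\<forall>k. (r ^^ k) v \<in> op_dom Ab" if hv: "v \<in> range (r ^^ m)" for v
  proof
    fix k
    obtain t where "v = (r ^^ m) t" using hv by blast
    thus "(r ^^ k) v \<in> op_dom Ab" using range_ok[of k t] by simp
  qed
  have rng_diff: "p - q \<in> range (r ^^ m)" if hp: "p \<in> range (r ^^ m)" and hq: "q \<in> range (r ^^ m)" for p q
  proof -
    obtain s where "p = (r ^^ m) s" using hp by blast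
    moreover obtain t where "q = (r ^^ m) t" using hq by blast
    ultimately have "p - q = (r ^^ m) (s - t)" by (simp add: rk_diff)
    thus ?thesis by blast
  qed
  have Dlin: "D (p - q) = D p - D q" if "p \<in> range (r ^^ m)" "q \<in> range (r ^^ m)" for p q
  proof -
    have gp: "p \<in> op_dom Ab" "(r ^^ m) p \<in> op_dom Ab"
      using spec[OF good[OF that(1)], of 0] spec[OF good[OF that(1)], of m] by simp_all
    have gq: "q \<in> op_dom Ab" "(r ^^ m) q \<in> op_dom Ab"
      using spec[OF good[OF that(2)], of 0] spec[OF good[OF that(2)], of m] by simp_all
    have "a (p - q) = a p - a q" using a_diff[OF gp(1) gq(1)] by blast
    moreover have "a ((r ^^ m) p - (r ^^ m) q) = a ((r ^^ m) p) - a ((r ^^ m) q)"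
      using a_diff[OF gp(2) gq(2)] by blast
    ultimately show ?thesis by (simp add: D_def rk_diff)
  qed
  have Dbd: "norm (D v) \<le> K * norm v" if "v \<in> range (r ^^ m)" for v
    unfolding D_def K_def by (rule tele[OF b good[OF that]])
  have "Cauchy (\<lambda>n. D (X n))"
    unfolding Cauchy_iff
  proof (intro allI impI)
    fix e :: real assume e: "0 < e"
    have "Cauchy X" using X(2) by (rule LIMSEQ_imp_Cauchy)
    moreover have "0 < e / (K + 1)" using e K0 by simp
    ultimately obtain M where M: "\<forall>p\<ge>M. \<forall>q\<ge>M. norm (X p - X q) < e / (K + 1)"
      unfolding Cauchy_iff by blast
    show "\<exists>M. \<forall>p\<ge>M. \<forall>q\<ge>M. norm (D (X p) - D (X q)) < e"
    proof (intro exI allI impI)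
      fix p q assume pq: "M \<le> p" "M \<le> q"
      have "norm (D (X p) - D (X q)) = norm (D (X p - X q))" using Dlin[OF spec[OF X(1), of p] spec[OF X(1), of q]] by simp
      also have "\<dots> \<le> K * norm (X p - X q)" by (rule Dbd[OF rng_diff[OF spec[OF X(1), of p] spec[OF X(1), of q]]])
      also have "\<dots> \<le> K * (e / (K + 1))" using M pq K0 by (intro mult_left_mono) (auto intro: less_imp_le)
      also have "\<dots> < e" using e K0 by (simp add: field_simps)
      finally show "norm (D (X p) - D (X q)) < e" .
    qed
  qed
  then obtain y' where Y: "(\<lambda>n. D (X n)) \<longlonglongrightarrow> y'" by (auto simp: Cauchy_convergent_iff convergent_def)
  have ny: "norm y' \<le> K * norm x"
  proof (rule LIMSEQ_le)
    show "(\<lambda>n. norm (D (X n))) \<longlonglongrightarrow> norm y'" by (rule tendsto_norm[OF Y])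
    show "(\<lambda>n. K * norm (X n)) \<longlonglongrightarrow> K * norm x" by (intro tendsto_intros X(2))
    show "\<exists>N. \<forall>n\<ge>N. norm (D (X n)) \<le> K * norm (X n)" using Dbd[OF spec[OF X(1)]] by blast
  qed
  have "y' - y = 0"
  proof (rule perp)
    fix t
    define u where "u = (rs ^^ m) t"
    have mem: "(X n, D (X n)) \<in> ad (R ^^ m) Ab" for n
    proof -
      have g: "\<forall>k. (r ^^ k) (X n) \<in> op_dom Ab" by (rule good[OF spec[OF X(1)]])
      show ?thesis unfolding ad_mem D_def using g[rule_format, of 0] g[rule_format, of m] by simp
    qed
    have eq: "ip (D (X n)) u = ip (X n) (W m u)" for n unfolding u_def by (rule ad_weak[OF mem])
    have l1: "(\<lambda>n. ip (D (X n)) u) \<longlonglongrightarrow> ip y' u" by (rule tendsto_ip_left[OF Y])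
    have "(\<lambda>n. ip (X n) (W m u)) \<longlonglongrightarrow> ip x (W m u)" by (rule tendsto_ip_left[OF X(2)])
    moreover have "ip x (W m u) = ip y u" unfolding u_def by (rule ad_weak[OF xy, symmetric])
    ultimately have l2: "(\<lambda>n. ip (D (X n)) u) \<longlonglongrightarrow> ip y u" using eq by simp
    have "ip y' u = ip y u" by (rule LIMSEQ_unique[OF l1 l2])
    thus "ip (y' - y) ((rs ^^ m) t) = 0" by (simp add: ip_diffl u_def)
  qed
  thus ?thesis using ny by simp
qed

end

theorem lemma9:
  fixes sc :: "complex \<Rightarrow> 'a::banach \<Rightarrow> 'a"
    and ip :: "'a \<Rightarrow> 'a \<Rightarrow> complex"
    and A S :: "('a \<times> 'a) set"
    and z :: complex and m :: nat
  assumes H: "complex_hilbert sc ip"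
    and A_cl: "closable sc A" and A_dd: "densely_defined A"
    and S_cl: "closed_op sc S" and S_dd: "densely_defined S"
    and z_res: "z \<in> resolvent_set sc S"
    and dom1: "op_dom (op_pow S m) \<subseteq> op_dom (op_closure A)"
    and dom2: "op_dom (op_pow (adjoint ip S) m) \<subseteq> op_dom (adjoint ip A)"
  shows "closable sc (ad (op_inverse (op_shift sc S z)) (op_closure A)) \<and>
         densely_defined (ad (op_inverse (op_shift sc S z)) (op_closure A)) \<and>
         (bounded_op (ad (op_inverse (op_shift sc S z)) (op_closure A)) \<longrightarrow>
            op_norm (ad (op_pow (op_inverse (op_shift sc S z)) m) (op_closure A))
              \<le> real m * op_norm (op_inverse (op_shift sc S z)) ^ (m - 1)
                 * op_norm (ad (op_inverse (op_shift sc S z)) (op_closure A)))"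
proof -
  interpret s: setting sc ip A S z m
    using H A_cl A_dd S_cl S_dd z_res dom1 dom2
    by (simp add: setting_def setting_axioms_def hilb_def)
  have eR: "op_inverse (op_shift sc S z) = s.R" by (simp add: s.R_def)
  have eA: "op_closure A = s.Ab" by (simp add: s.Ab_def)
  have R1: "s.R ^^ Suc 0 = s.R" by simp
  have c1: "closable sc (ad s.R s.Ab)" using s.ad_closable[of "Suc 0"] by (simp only: R1)
  have c2: "densely_defined (ad s.R s.Ab)" using s.ad_dense by (simp only: R1)
  have c3: "op_norm (ad (op_pow s.R m) s.Ab) \<le> real m * op_norm s.R ^ (m - 1) * op_norm (ad s.R s.Ab)"
    if b: "bounded_op (ad s.R s.Ab)"
  proof -
    have b': "bounded_op (ad (s.R ^^ Suc 0) s.Ab)" using b by (simp only: R1)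
    have K0: "0 \<le> s.K" unfolding s.K_def using s.cR0 s.c10[OF b'] by simp
    have "op_norm (ad (s.R ^^ m) s.Ab) \<le> s.K"
      by (rule s.op_norm_le[OF s.ad_op K0 s.main_bound[OF b']])
    thus ?thesis by (simp only: op_pow_def s.K_def s.cR_def s.c1_def R1)
  qed
  show ?thesis unfolding eR eA using c1 c2 c3 by blast
qed

end
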